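(* Let $m$ range over even integers tending to infinity, with $N=N(m)$, $n=n(m)$ positive integers satisfying $N=o(m)$ and $n=o(m)$, and fix $0<\varepsilon\le1$. Then, uniformly over $\omega\in K_m$, $$\log\Pr_{(u,q^\omega,u)}(A)=-\Big(1+\tfrac12\varepsilon^2\Big)\frac{N^2}{m}\,(1+o(1))+O(1),$$ where $A$ is the event that no symbol appears more than once in $X$ and no symbol appears more than once in $Y$.
   Context: Let $u$ be the uniform distribution on $[m]=\{1,\dots,m\}$. Let $K_m$ be the collection of all subsets of $[m]$ of cardinality $m/2$. For $\omega\in K_m$ let $q^\omega$ be the distribution on $[m]$ with $q^\omega_j=(1+\varepsilon)/m$ for $j\in\omega$ and $q^\omega_j=(1-\varepsilon)/m$ for $j\notin\omega$. $\Pr_{(u,q^\omega,u)}$ denotes the probability when $X=(X_1,\dots,X_N)$ is i.i.d. uniform on $[m]$, $Y=(Y_1,\dots,Y_N)$ is i.i.d. with marginal $q^\omega$, $Z=(Z_1,\dots,Z_n)$ is i.i.d. uniform on $[m]$, and $X,Y,Z$ are independent. *)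

theory Defs
  imports "HOL-Analysis.Analysis"
begin

definition Kset :: "nat \<Rightarrow> nat set set" where
  "Kset m = {w. w \<subseteq> {1..m} \<and> card w = m div 2}"

definition unif :: "nat \<Rightarrow> nat \<Rightarrow> real" where
  "unif m j = 1 / real m"

definition qdist :: "real \<Rightarrow> nat \<Rightarrow> nat set \<Rightarrow> nat \<Rightarrow> real" where
  "qdist \<epsilon> m w j = (if j \<in> w then (1 + \<epsilon>) / real m else (1 - \<epsilon>) / real m)"

text \<open>Pr_{(u,q^omega,u)}(A): X = (X_1..X_N) iid u, Y = (Y_1..Y_N) iid q^omega,
  Z = (Z_1..Z_n) iid u, all independent (samples indexed by {..<N}, {..<n});
  A = no symbol repeated in X and no symbol repeated in Y.\<close>
definition probA :: "real \<Rightarrow> nat \<Rightarrow> nat \<Rightarrow> nat \<Rightarrow> nat set \<Rightarrow> real" where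
  "probA \<epsilon> m N n w =
     (\<Sum>x\<in>PiE {..<N} (\<lambda>_. {1..m}). \<Sum>y\<in>PiE {..<N} (\<lambda>_. {1..m}). \<Sum>z\<in>PiE {..<n} (\<lambda>_. {1..m}).
        (\<Prod>i<N. unif m (x i)) * (\<Prod>i<N. qdist \<epsilon> m w (y i)) * (\<Prod>i<n. unif m (z i))
        * of_bool (inj_on x {..<N} \<and> inj_on y {..<N}))"

end

theory Submission
  imports Defs
begin

definition T :: "(nat \<Rightarrow> real) \<Rightarrow> nat set \<Rightarrow> nat \<Rightarrow> real" where
"T q A N = (\<Sum>y\<in>PiE {..<N} (\<lambda>_. A). (\<Prod>i<N. q (y i)) * of_bool (inj_on y {..<N}))"

lemma T0: "T q A 0 = 1" by (simp add: T_def)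

lemma inj_upd_iff:
  "inj_on (g(N:=a)) {..<Suc N} \<longleftrightarrow> inj_on g {..<N} \<and> a \<notin> g ` {..<N}"
proof -
  have "{..<Suc N} = insert N {..<N}" by auto
  moreover have "inj_on (g(N:=a)) {..<N} = inj_on g {..<N}"
    by (rule inj_on_cong) auto
  moreover have "(g(N:=a)) ` {..<N} = g ` {..<N}" by auto
  ultimately show ?thesis by (simp add: inj_on_insert)
qed

lemma TSuc:
  assumes "finite A"
  shows "T q A (Suc N) = (\<Sum>a\<in>A. q a * T q (A - {a}) N)"
proof -
  let ?P = "PiE {..<N} (\<lambda>_. A)"
  let ?F = "\<lambda>y. (\<Prod>i<Suc N. q (y i)) * of_bool (inj_on y {..<Suc N})"
  have eq: "PiE {..<Suc N} (\<lambda>_. A) = (\<lambda>(a, g). g(N := a)) ` (A \<times> ?P)"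
    using PiE_insert_eq[of N "{..<N}" "\<lambda>_. A"] by (simp add: lessThan_Suc)
  have inj: "inj_on (\<lambda>(a, g). g(N := a)) (A \<times> ?P)"
  proof (rule inj_onI, clarify)
    fix a g b h assume g: "g \<in> ?P" and h: "h \<in> ?P" and e: "g(N := a) = h(N := b)"
    have "a = b" using fun_cong[OF e, of N] by simp
    moreover have "g = h"
    proof
      fix x show "g x = h x"
        using fun_cong[OF e, of x] g h by (cases "x < N") (auto simp: PiE_def extensional_def)
    qed
    ultimately show "a = b \<and> g = h" by simp
  qed
  have "T q A (Suc N) = (\<Sum>y\<in>PiE {..<Suc N} (\<lambda>_. A). ?F y)" by (simp add: T_def)
  also have "\<dots> = (\<Sum>(a,g)\<in>A \<times> ?P. ?F (g(N:=a)))"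
    unfolding eq by (subst sum.reindex[OF inj]) (simp add: case_prod_unfold)
  also have "\<dots> = (\<Sum>a\<in>A. \<Sum>g\<in>?P. ?F (g(N:=a)))" by (rule sum.cartesian_product[symmetric])
  also have "\<dots> = (\<Sum>a\<in>A. q a * T q (A - {a}) N)"
  proof (rule sum.cong[OF refl])
    fix a assume aA: "a \<in> A"
    have fin: "finite ?P" using assms by (simp add: finite_PiE)
    have sub: "PiE {..<N} (\<lambda>_. A - {a}) \<subseteq> ?P" by (auto simp: PiE_def Pi_def)
    have "(\<Sum>g\<in>?P. ?F (g(N:=a))) =
          (\<Sum>g\<in>?P. q a * ((\<Prod>i<N. q (g i)) * of_bool (inj_on g {..<N} \<and> a \<notin> g ` {..<N})))"
    proof (rule sum.cong[OF refl])
      fix g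
      have "(\<Prod>i<Suc N. q ((g(N:=a)) i)) = q a * (\<Prod>i<N. q (g i))"
        by (simp add: prod.lessThan_Suc)
      then show "?F (g(N:=a)) = q a * ((\<Prod>i<N. q (g i)) * of_bool (inj_on g {..<N} \<and> a \<notin> g ` {..<N}))"
        by (simp add: inj_upd_iff)
    qed
    also have "\<dots> = q a * (\<Sum>g\<in>?P. (\<Prod>i<N. q (g i)) * of_bool (inj_on g {..<N} \<and> a \<notin> g ` {..<N}))"
      by (simp add: sum_distrib_left)
    also have "(\<Sum>g\<in>?P. (\<Prod>i<N. q (g i)) * of_bool (inj_on g {..<N} \<and> a \<notin> g ` {..<N}))
        = (\<Sum>g\<in>PiE {..<N} (\<lambda>_. A - {a}). (\<Prod>i<N. q (g i)) * of_bool (inj_on g {..<N}))"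
    proof (rule sum.mono_neutral_cong_right[OF fin sub])
      show "\<forall>g\<in>?P - PiE {..<N} (\<lambda>_. A - {a}). (\<Prod>i<N. q (g i)) * of_bool (inj_on g {..<N} \<and> a \<notin> g ` {..<N}) = 0"
        by (auto simp: PiE_def Pi_def)
      show "\<And>g. g \<in> PiE {..<N} (\<lambda>_. A - {a}) \<Longrightarrow> (\<Prod>i<N. q (g i)) * of_bool (inj_on g {..<N} \<and> a \<notin> g ` {..<N}) = (\<Prod>i<N. q (g i)) * of_bool (inj_on g {..<N})"
        by (auto simp: PiE_def Pi_def)
    qed
    finally show "(\<Sum>g\<in>?P. ?F (g(N:=a))) = q a * T q (A - {a}) N" by (simp only: T_def)
  qed
  finally show ?thesis .
qed

lemma card_minus_real: "finite A \<Longrightarrow> a \<in> A \<Longrightarrow> real (card (A - {a})) = real (card A) - 1"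
proof -
  assume "finite A" "a \<in> A"
  then have "card A = Suc (card (A - {a}))" by (metis card.remove)
  then show ?thesis by simp
qed

definition ff :: "real \<Rightarrow> nat \<Rightarrow> real" where
  "ff s k = (\<Prod>i<k. s - real i)"

lemma ff_0[simp]: "ff s 0 = 1" by (simp add: ff_def)

lemma ff_Suc: "ff s (Suc k) = s * ff (s - 1) k"
  unfolding ff_def prod.lessThan_Suc_shift by (simp add: algebra_simps)

lemma Tconst: "finite A \<Longrightarrow> T (\<lambda>_. c) A N = c ^ N * ff (real (card A)) N"
proof (induction N arbitrary: A)
  case 0 then show ?case by (simp add: T0)
next
  case (Suc N)
  have "T (\<lambda>_. c) A (Suc N) = (\<Sum>a\<in>A. c * (c ^ N * ff (real (card A) - 1) N))"
    unfolding TSuc[OF Suc.prems]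
  proof (rule sum.cong[OF refl])
    fix a assume "a \<in> A"
    then have "real (card (A - {a})) = real (card A) - 1" using Suc.prems
      by (intro card_minus_real) auto
    then show "c * T (\<lambda>_. c) (A - {a}) N = c * (c ^ N * ff (real (card A) - 1) N)"
      using Suc.IH[of "A - {a}"] Suc.prems by simp
  qed
  also have "\<dots> = c ^ Suc N * ff (real (card A)) (Suc N)"
    by (simp add: ff_Suc)
  finally show ?case .
qed

lemma leibniz:
  fixes A B :: "nat \<Rightarrow> real"
  shows "(\<Sum>k\<le>Suc N. real (Suc N choose k) * A k * B (Suc N - k))
       = (\<Sum>k\<le>N. real (N choose k) * A (Suc k) * B (N - k))
       + (\<Sum>k\<le>N. real (N choose k) * A k * B (Suc (N - k)))"
proof -
  have h2: "A 0 * B (Suc N) + (\<Sum>k\<le>N. real (N choose Suc k) * A (Suc k) * B (N - k))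
      = (\<Sum>k\<le>N. real (N choose k) * A k * B (Suc (N - k)))"
  proof -
    have "A 0 * B (Suc N) + (\<Sum>k\<le>N. real (N choose Suc k) * A (Suc k) * B (N - k))
      = (\<Sum>k\<le>Suc N. real (N choose k) * A k * B (Suc N - k))"
      by (subst sum.atMost_Suc_shift) simp
    also have "\<dots> = (\<Sum>k\<le>N. real (N choose k) * A k * B (Suc N - k))"
      by (simp add: sum.atMost_Suc)
    also have "\<dots> = (\<Sum>k\<le>N. real (N choose k) * A k * B (Suc (N - k)))"
      by (rule sum.cong) (auto simp: Suc_diff_le)
    finally show ?thesis .
  qed
  have "(\<Sum>k\<le>Suc N. real (Suc N choose k) * A k * B (Suc N - k))
     = A 0 * B (Suc N) + (\<Sum>k\<le>N. real (Suc N choose Suc k) * A (Suc k) * B (N - k))"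
    by (subst sum.atMost_Suc_shift) simp
  also have "\<dots> = A 0 * B (Suc N) + (\<Sum>k\<le>N. real (N choose k) * A (Suc k) * B (N - k))
       + (\<Sum>k\<le>N. real (N choose Suc k) * A (Suc k) * B (N - k))"
    by (simp add: sum.distrib algebra_simps)
  finally show ?thesis using h2 by simp
qed

definition Gf :: "real \<Rightarrow> real \<Rightarrow> real \<Rightarrow> real \<Rightarrow> nat \<Rightarrow> real" where
  "Gf \<alpha> \<beta> s t N = (\<Sum>k\<le>N. real (N choose k) * (\<alpha>^k * ff s k) * (\<beta>^(N-k) * ff t (N-k)))"

lemma Gf0: "Gf \<alpha> \<beta> s t 0 = 1" by (simp add: Gf_def)

lemma GfSuc: "Gf \<alpha> \<beta> s t (Suc N) = s * \<alpha> * Gf \<alpha> \<beta> (s-1) t N + t * \<beta> * Gf \<alpha> \<beta> s (t-1) N"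
proof -
  have "Gf \<alpha> \<beta> s t (Suc N) = (\<Sum>k\<le>N. real (N choose k) * (\<alpha>^Suc k * ff s (Suc k)) * (\<beta>^(N-k) * ff t (N-k)))
       + (\<Sum>k\<le>N. real (N choose k) * (\<alpha>^k * ff s k) * (\<beta>^Suc (N-k) * ff t (Suc (N-k))))"
    unfolding Gf_def by (rule leibniz[where A="\<lambda>k. \<alpha>^k * ff s k" and B="\<lambda>k. \<beta>^k * ff t k"])
  also have "\<dots> = s * \<alpha> * Gf \<alpha> \<beta> (s-1) t N + t * \<beta> * Gf \<alpha> \<beta> s (t-1) N"
    unfolding Gf_def ff_Suc sum_distrib_left
    by (intro arg_cong2[where f="(+)"] sum.cong) (auto simp: algebra_simps)
  finally show ?thesis .
qed

lemma Ttwo: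
  fixes w :: "nat set"
  assumes "finite A"
  shows "T (\<lambda>j. if j \<in> w then \<alpha> else \<beta>) A N = Gf \<alpha> \<beta> (real (card (A \<inter> w))) (real (card (A - w))) N"
  using assms
proof (induction N arbitrary: A)
  case 0 then show ?case by (simp add: T0 Gf0)
next
  case (Suc N)
  let ?q = "\<lambda>j. if j \<in> w then \<alpha> else \<beta>"
  let ?s = "real (card (A \<inter> w))" and ?t = "real (card (A - w))"
  have fin1: "finite (A \<inter> w)" and fin2: "finite (A - w)" using Suc.prems by auto
  have "T ?q A (Suc N) = (\<Sum>a\<in>A. ?q a * T ?q (A - {a}) N)" by (rule TSuc[OF Suc.prems])
  also have "\<dots> = (\<Sum>a\<in>A \<inter> w. ?q a * T ?q (A - {a}) N) + (\<Sum>a\<in>A - w. ?q a * T ?q (A - {a}) N)"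
    using Suc.prems by (metis (no_types, lifting) Diff_Int_distrib2 Diff_cancel Int_Diff Int_Diff_Un sum.union_disjoint fin1 fin2 Int_Diff_disjoint)
  also have "(\<Sum>a\<in>A \<inter> w. ?q a * T ?q (A - {a}) N) = (\<Sum>a\<in>A \<inter> w. \<alpha> * Gf \<alpha> \<beta> (?s - 1) ?t N)"
  proof (rule sum.cong[OF refl])
    fix a assume a: "a \<in> A \<inter> w"
    have "(A - {a}) \<inter> w = (A \<inter> w) - {a}" "(A - {a}) - w = A - w" using a by auto
    moreover have "real (card ((A \<inter> w) - {a})) = ?s - 1" using a fin1
      by (intro card_minus_real) auto
    ultimately show "?q a * T ?q (A - {a}) N = \<alpha> * Gf \<alpha> \<beta> (?s - 1) ?t N"
      using Suc.IH[of "A - {a}"] Suc.prems a by simp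
  qed
  also have "(\<Sum>a\<in>A - w. ?q a * T ?q (A - {a}) N) = (\<Sum>a\<in>A - w. \<beta> * Gf \<alpha> \<beta> ?s (?t - 1) N)"
  proof (rule sum.cong[OF refl])
    fix a assume a: "a \<in> A - w"
    have "(A - {a}) \<inter> w = (A \<inter> w)" "(A - {a}) - w = (A - w) - {a}" using a by auto
    moreover have "real (card ((A - w) - {a})) = ?t - 1" using a fin2
      by (intro card_minus_real) auto
    ultimately show "?q a * T ?q (A - {a}) N = \<beta> * Gf \<alpha> \<beta> ?s (?t - 1) N"
      using Suc.IH[of "A - {a}"] Suc.prems a by simp
  qed
  finally show ?case by (simp add: GfSuc algebra_simps)
qed


definition fp :: "real \<Rightarrow> nat \<Rightarrow> real" where
  "fp h k = (\<Prod>i<k. 1 - real i / h)"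

lemma ff_fp: "h > 0 \<Longrightarrow> c^k * ff h k = (c*h)^k * fp h k"
proof -
  assume h: "h > 0"
  have "ff h k = (\<Prod>i<k. h * (1 - real i / h))"
    unfolding ff_def using h by (intro prod.cong) (auto simp: field_simps)
  also have "\<dots> = h^k * fp h k" by (simp add: prod.distrib fp_def)
  finally show ?thesis by (simp add: power_mult_distrib)
qed

lemma sum_i: "(\<Sum>i<k. real i) = real k * (real k - 1) / 2"
  by (induction k) (auto simp: field_simps)

lemma sum_i2: "(\<Sum>i<k. real i / h * (real i / h)) \<le> real k ^ 3 / h^2"
proof -
  have "(\<Sum>i<k. real i / h * (real i / h)) \<le> real (card {..<k}) * (real k ^ 2 / h^2)"
  proof (rule sum_bounded_above)
    fix i assume "i \<in> {..<k}"
    then have "real i * real i \<le> real k * real k" by (intro mult_mono) auto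
    then show "real i / h * (real i / h) \<le> real k ^ 2 / h^2"
      by (simp add: power2_eq_square divide_right_mono)
  qed
  then show ?thesis by (simp add: power3_eq_cube power2_eq_square)
qed

lemma fp_upper:
  assumes h: "h > 0" and k: "real k \<le> h"
  shows "fp h k \<le> exp (- (real k ^ 2 - real k) / (2*h))"
proof -
  have "fp h k \<le> (\<Prod>i<k. exp (- (real i / h)))"
    unfolding fp_def
  proof (rule prod_mono)
    fix i assume "i \<in> {..<k}"
    then have "real i \<le> h" using k by simp
    then show "0 \<le> 1 - real i / h \<and> 1 - real i / h \<le> exp (- (real i / h))"
      using h exp_ge_add_one_self[of "- (real i / h)"] by simp
  qed
  also have "\<dots> = exp (- (\<Sum>i<k. real i) / h)"
    by (simp add: exp_sum[symmetric] sum_negf sum_divide_distrib)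
  also have "\<dots> = exp (- (real k ^ 2 - real k) / (2*h))"
    by (simp add: sum_i power2_eq_square divide_simps) (simp add: algebra_simps)
  finally show ?thesis .
qed

lemma fp_lower:
  assumes h: "h > 0" and k: "2 * real k \<le> h"
  shows "exp (- (real k ^ 2) / (2*h) - 2 * real k ^ 3 / h^2) \<le> fp h k"
proof -
  have P: "(\<Prod>i<k. exp (- (real i / h) - 2 * (real i / h)^2)) \<le> fp h k"
    unfolding fp_def
  proof (rule prod_mono)
    fix i assume "i \<in> {..<k}"
    then have "real i \<le> real k" by simp
    then have x0: "0 \<le> real i / h" and x1: "real i / h \<le> 1/2" using h k by (auto simp: divide_simps)
    have "exp (- (real i / h) - 2 * (real i / h)^2) \<le> exp (ln (1 - real i / h))"
      using ln_one_minus_pos_lower_bound[OF x0 x1] by simp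
    also have "\<dots> = 1 - real i / h" using x1 by (intro exp_ln) linarith
    finally show "0 \<le> exp (- (real i / h) - 2 * (real i / h)^2) \<and> exp (- (real i / h) - 2 * (real i / h)^2) \<le> 1 - real i / h"
      using exp_gt_zero[of "- (real i / h) - 2 * (real i / h)^2"] by linarith
  qed
  have Q: "(\<Prod>i<k. exp (- (real i / h) - 2 * (real i / h)^2))
      = exp (- (\<Sum>i<k. real i) / h - 2 * (\<Sum>i<k. real i / h * (real i / h)))"
  proof -
    have "(\<Prod>i<k. exp (- (real i / h) - 2 * (real i / h)^2)) = exp (\<Sum>i<k. - (real i / h) - 2 * (real i / h)^2)"
      by (rule exp_sum[symmetric]) simp
    also have "(\<Sum>i<k. - (real i / h) - 2 * (real i / h)^2) = - (\<Sum>i<k. real i) / h - 2 * (\<Sum>i<k. real i / h * (real i / h))"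
    proof -
      have "(\<Sum>i<k. - (real i / h) - 2 * (real i / h)^2) = (\<Sum>i<k. - (real i / h)) - (\<Sum>i<k. 2 * (real i / h * (real i / h)))"
        by (simp add: sum_subtractf power2_eq_square)
      also have "\<dots> = - (\<Sum>i<k. real i / h) - 2 * (\<Sum>i<k. real i / h * (real i / h))"
        by (simp only: sum_negf sum_distrib_left)
      also have "(\<Sum>i<k. real i / h) = (\<Sum>i<k. real i) / h" by (simp add: sum_divide_distrib)
      finally show ?thesis by simp
    qed
    finally show ?thesis .
  qed
  have R: "- (real k ^ 2) / (2*h) - 2 * real k ^ 3 / h^2 \<le> - (\<Sum>i<k. real i) / h - 2 * (\<Sum>i<k. real i / h * (real i / h))"
  proof -
    have "(\<Sum>i<k. real i) / h \<le> real k ^ 2 / (2*h)"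
      using h by (simp add: sum_i power2_eq_square field_simps)
    moreover have "- (\<Sum>i<k. real i) / h = - ((\<Sum>i<k. real i) / h)" by simp
    moreover have "- (real k ^ 2) / (2*h) = - (real k ^ 2 / (2*h))" by simp
    ultimately show ?thesis using sum_i2[where k=k and h=h] by linarith
  qed
  from R have "exp (- (real k ^ 2) / (2*h) - 2 * real k ^ 3 / h^2) \<le> exp (- (\<Sum>i<k. real i) / h - 2 * (\<Sum>i<k. real i / h * (real i / h)))"
    by (simp only: exp_le_cancel_iff)
  also have "\<dots> = (\<Prod>i<k. exp (- (real i / h) - 2 * (real i / h)^2))" using Q by simp
  also have "\<dots> \<le> fp h k" by (rule P)
  finally show ?thesis .
qed


lemma binom_nat_id:
  assumes "k \<le> M"
  shows "(Suc (Suc M) choose Suc k) * Suc k * (Suc M - k) = Suc (Suc M) * Suc M * (M choose k)"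
proof -
  have "(Suc (Suc M) choose Suc k) * Suc k = Suc (Suc M) * (Suc M choose k)"
    using Suc_times_binomial[of k "Suc M"] by (simp add: mult.commute)
  moreover have "(Suc M - k) * (Suc M choose k) = Suc M * (M choose k)"
    using binomial_absorb_comp[of "Suc M" k] by simp
  ultimately show ?thesis by (metis mult.assoc mult.commute)
qed

lemma binom_kNk:
  fixes p q :: real
  shows "(\<Sum>k\<le>N. real (N choose k) * p^k * q^(N-k) * (real k * real (N-k)))
     = real N * (real N - 1) * p * q * (p+q)^(N-2)"
proof (cases "N < 2")
  case True
  then have "N = 0 \<or> N = 1" by auto
  then show ?thesis by (auto simp: atMost_Suc)
next
  case False
  then obtain M where NM: "N = Suc (Suc M)" by (metis add_2_eq_Suc le_Suc_ex not_less)
  have "(\<Sum>k\<le>N. real (N choose k) * p^k * q^(N-k) * (real k * real (N-k)))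
      = (\<Sum>k\<le>Suc M. real (N choose Suc k) * p^Suc k * q^(N-Suc k) * (real (Suc k) * real (N-Suc k)))"
    unfolding NM by (subst sum.atMost_Suc_shift) simp
  also have "\<dots> = (\<Sum>k\<le>M. real (N choose Suc k) * p^Suc k * q^(N-Suc k) * (real (Suc k) * real (N-Suc k)))"
    by (simp add: NM)
  also have "\<dots> = (\<Sum>k\<le>M. real N * (real N - 1) * p * q * (real (M choose k) * p^k * q^(M-k)))"
  proof (rule sum.cong[OF refl])
    fix k assume "k \<in> {..M}"
    then have k: "k \<le> M" by simp
    have e0: "real (Suc (Suc M) choose Suc k) * real (Suc k) * real (Suc M - k) = real (Suc (Suc M)) * real (Suc M) * real (M choose k)"
      by (simp only: of_nat_mult[symmetric] binom_nat_id[OF k])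
    have e: "real (N choose Suc k) * real (Suc k) * real (N - Suc k) = real N * (real N - 1) * real (M choose k)"
      using e0 unfolding NM by simp
    have qe: "q^(N - Suc k) = q * q^(M-k)" using k by (simp add: NM Suc_diff_le)
    have "real (N choose Suc k) * p^Suc k * q^(N-Suc k) * (real (Suc k) * real (N-Suc k))
        = (real (N choose Suc k) * real (Suc k) * real (N - Suc k)) * (p * q * (p^k * q^(M-k)))"
      by (simp only: qe power_Suc mult_ac)
    also have "\<dots> = (real N * (real N - 1) * real (M choose k)) * (p * q * (p^k * q^(M-k)))"
      by (simp only: e)
    finally show "real (N choose Suc k) * p^Suc k * q^(N-Suc k) * (real (Suc k) * real (N-Suc k))
        = real N * (real N - 1) * p * q * (real (M choose k) * p^k * q^(M-k))"
      by (simp only: mult_ac)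
  qed
  also have "\<dots> = real N * (real N - 1) * p * q * (p+q)^M"
    by (simp add: sum_distrib_left[symmetric] binomial_ring[of p q M])
  finally show ?thesis by (simp add: NM)
qed

lemma jensen_exp:
  fixes w y :: "nat \<Rightarrow> real"
  assumes "finite A" "\<And>k. k \<in> A \<Longrightarrow> w k \<ge> 0" "(\<Sum>k\<in>A. w k) = 1"
  shows "exp (\<Sum>k\<in>A. w k * y k) \<le> (\<Sum>k\<in>A. w k * exp (y k))"
proof -
  define \<mu> where "\<mu> = (\<Sum>k\<in>A. w k * y k)"
  have "(\<Sum>k\<in>A. w k * (exp \<mu> * (1 + y k - \<mu>))) \<le> (\<Sum>k\<in>A. w k * exp (y k))"
  proof (rule sum_mono)
    fix k assume "k \<in> A"
    have "exp \<mu> * (1 + (y k - \<mu>)) \<le> exp \<mu> * exp (y k - \<mu>)"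
      by (intro mult_left_mono) auto
    also have "\<dots> = exp (y k)" by (simp add: exp_diff)
    finally show "w k * (exp \<mu> * (1 + y k - \<mu>)) \<le> w k * exp (y k)"
      using assms(2)[OF \<open>k \<in> A\<close>] by (intro mult_left_mono) (auto simp: algebra_simps)
  qed
  moreover have "(\<Sum>k\<in>A. w k * (exp \<mu> * (1 + y k - \<mu>))) = exp \<mu> * (\<Sum>k\<in>A. w k + w k * y k - \<mu> * w k)"
    by (simp add: sum_distrib_left algebra_simps)
  moreover have "(\<Sum>k\<in>A. w k + w k * y k - \<mu> * w k) = (\<Sum>k\<in>A. w k) + \<mu> - \<mu> * (\<Sum>k\<in>A. w k)"
    by (simp add: sum.distrib sum_subtractf sum_distrib_left \<mu>_def)
  ultimately show ?thesis using assms(3) by (simp add: \<mu>_def)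
qed


definition SY :: "real \<Rightarrow> real \<Rightarrow> real \<Rightarrow> nat \<Rightarrow> real" where
  "SY p q h N = (\<Sum>k\<le>N. real (N choose k) * (p^k * fp h k) * (q^(N-k) * fp h (N-k)))"

lemma exp_neg_bound:
  fixes l :: real assumes "l \<le> 0"
  shows "exp l \<le> 1 + l + l^2"
proof -
  define u where "u = - l"
  have u: "u \<ge> 0" using assms by (simp add: u_def)
  have "1 + u \<le> exp u" by simp
  then have "exp (-u) * (1 + u) \<le> 1"
    by (metis exp_minus_inverse exp_ge_zero mult_left_mono mult.commute)
  moreover have "1 \<le> (1 - u + u^2) * (1 + u)"
    using u by (simp add: algebra_simps power2_eq_square power3_eq_cube)
  ultimately have "exp (-u) * (1 + u) \<le> (1 - u + u^2) * (1 + u)" by linarith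
  then have "exp (-u) \<le> 1 - u + u^2"
    using u by (simp add: mult_le_cancel_right pos_add_strict)
  then show ?thesis by (simp add: u_def)
qed

lemma fp_nonneg: "h > 0 \<Longrightarrow> real k \<le> h \<Longrightarrow> 0 \<le> fp h k"
  unfolding fp_def by (intro prod_nonneg) (auto simp: field_simps)

lemma SY_upper:
  fixes p q m :: real
  assumes m: "m > 0" and p: "p \<ge> 0" and q: "q \<ge> 0" and pq: "p + q = 1" and qp: "q \<le> p"
    and N: "4 * real N \<le> m"
  shows "SY p q (m/2) N \<le> exp (real N / m - (p^2 + q^2) * real N ^ 2 / m + 4 * p * (p-q)^2 * real N ^ 3 / m^2)"
proof -
  define l where "l = - 2 * real N * (p - q) / m"
  define c0 where "c0 = real N / m + ((p^2 + q^2) * real N ^ 2 - 2 * q * real N ^ 2) / m"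
  have l0: "l \<le> 0" using m qp by (simp add: l_def divide_nonpos_pos)
  have h: "m / 2 > 0" using m by simp
  have step1: "real (N choose k) * (p^k * fp (m/2) k) * (q^(N-k) * fp (m/2) (N-k))
       \<le> real (N choose k) * p^k * q^(N-k) * exp (c0 + l * real k)" if k: "k \<le> N" for k
  proof -
    have kN: "real k \<le> real N" "real (N - k) \<le> real N" using k by auto
    have b1: "fp (m/2) k \<le> exp (- (real k ^ 2 - real k) / m)"
      using fp_upper[OF h, of k] kN N by simp
    have mm: "2 * (m/2) = m" by simp
    have b2: "fp (m/2) (N-k) \<le> exp (- (real (N-k) ^ 2 - real (N-k)) / (2 * (m/2)))"
      by (rule fp_upper[OF h]) (use kN N in linarith)
    then have b2: "fp (m/2) (N-k) \<le> exp (- (real (N-k) ^ 2 - real (N-k)) / m)"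
      by (simp only: mm)
    have n1: "0 \<le> fp (m/2) k" "0 \<le> fp (m/2) (N-k)" using fp_nonneg[OF h] kN N by auto
    have "fp (m/2) k * fp (m/2) (N-k) \<le> exp (- (real k ^ 2 - real k) / m) * exp (- (real (N-k) ^ 2 - real (N-k)) / m)"
      by (intro mult_mono b1 b2 n1) auto
    also have "\<dots> = exp (- (real k ^ 2 - real k) / m - (real (N-k) ^ 2 - real (N-k)) / m)"
      by (simp only: mult_exp_exp) (rule arg_cong[where f=exp], use m in \<open>simp add: field_simps\<close>)
    also have "\<dots> \<le> exp (c0 + l * real k)"
    proof -
      have sq: "0 \<le> (real k - p * real N)^2 + (real (N-k) - q * real N)^2" by simp
      have rk: "real (N-k) = real N - real k" using k by simp
      have "real N - real k ^ 2 - real (N-k) ^ 2 \<le> real N + (p^2 + q^2) * real N ^ 2 - 2 * q * real N ^ 2 - 2 * real N * (p - q) * real k"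
      proof -
        have "q = 1 - p" using pq by simp
        then show ?thesis using sq unfolding rk by (simp add: power2_eq_square algebra_simps)
      qed
      then have "(real N - real k ^ 2 - real (N-k) ^ 2) / m \<le> (real N + (p^2 + q^2) * real N ^ 2 - 2 * q * real N ^ 2 - 2 * real N * (p - q) * real k) / m"
        using m by (simp add: divide_right_mono)
      moreover have "- (real k ^ 2 - real k) / m - (real (N-k) ^ 2 - real (N-k)) / m = (real N - real k ^ 2 - real (N-k) ^ 2) / m"
        using rk m by (simp add: field_simps)
      moreover have "c0 + l * real k = (real N + (p^2 + q^2) * real N ^ 2 - 2 * q * real N ^ 2 - 2 * real N * (p - q) * real k) / m"
        unfolding c0_def l_def using m by (simp add: field_simps)
      ultimately show ?thesis by simp
    qed
    finally have "fp (m/2) k * fp (m/2) (N-k) \<le> exp (c0 + l * real k)" .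
    then have "real (N choose k) * p^k * q^(N-k) * (fp (m/2) k * fp (m/2) (N-k)) \<le> real (N choose k) * p^k * q^(N-k) * exp (c0 + l * real k)"
      using p q by (intro mult_left_mono) auto
    then show ?thesis by (simp add: mult_ac)
  qed
  have "SY p q (m/2) N \<le> (\<Sum>k\<le>N. real (N choose k) * p^k * q^(N-k) * exp (c0 + l * real k))"
    unfolding SY_def by (intro sum_mono step1) simp
  also have "\<dots> = exp c0 * (\<Sum>k\<le>N. real (N choose k) * (p * exp l)^k * q^(N-k))"
    by (simp add: sum_distrib_left exp_add exp_of_nat2_mult power_mult_distrib mult_ac)
  also have "\<dots> = exp c0 * (p * exp l + q)^N"
    by (simp add: binomial_ring)
  also have "\<dots> \<le> exp c0 * exp (p * (l + l^2)) ^ N"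
  proof -
    have "p * exp l + q = 1 + p * (exp l - 1)" using pq by (simp add: algebra_simps)
    also have "\<dots> \<le> 1 + p * (l + l^2)" using exp_neg_bound[OF l0] p by (intro add_left_mono mult_left_mono) auto
    also have "\<dots> \<le> exp (p * (l + l^2))" by simp
    finally have "p * exp l + q \<le> exp (p * (l + l^2))" .
    moreover have "0 \<le> p * exp l + q" using p q by simp
    ultimately show ?thesis by (intro mult_left_mono power_mono) auto
  qed
  also have "\<dots> = exp (c0 + real N * (p * (l + l^2)))"
    by (simp add: exp_add exp_of_nat_mult)
  also have "c0 + real N * (p * (l + l^2)) = real N / m - (p^2 + q^2) * real N ^ 2 / m + 4 * p * (p-q)^2 * real N ^ 3 / m^2"
  proof -
    have qq: "q = 1 - p" using pq by simp
    show ?thesis unfolding c0_def l_def qq using m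
      by (simp add: field_simps power2_eq_square power3_eq_cube)
  qed
  finally show ?thesis .
qed


lemma fp_lower2:
  fixes m :: real
  assumes m: "m > 0" and k: "real k \<le> real N" and N: "4 * real N \<le> m"
  shows "exp (- (1 + 8 * real N / m) * real k ^ 2 / m) \<le> fp (m/2) k"
proof -
  have h: "m/2 > 0" using m by simp
  have "exp (- (real k ^ 2) / (2*(m/2)) - 2 * real k ^ 3 / (m/2)^2) \<le> fp (m/2) k"
    by (rule fp_lower[OF h]) (use k N in linarith)
  moreover have "- (1 + 8 * real N / m) * real k ^ 2 / m \<le> - (real k ^ 2) / (2*(m/2)) - 2 * real k ^ 3 / (m/2)^2"
  proof -
    have "real k * (real k * real k) \<le> real N * (real k * real k)"
      by (rule mult_right_mono) (use k in auto)
    then have "real k ^ 3 \<le> real N * real k ^ 2"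
      by (simp add: power3_eq_cube power2_eq_square mult.assoc)
    then have "8 * real k ^ 3 / m^2 \<le> 8 * (real N * real k ^ 2) / m^2"
      using m by (intro divide_right_mono) auto
    moreover have "- (1 + 8 * real N / m) * real k ^ 2 / m = - (real k ^ 2) / m - 8 * (real N * real k ^ 2) / m^2"
      using m by (simp add: field_simps power2_eq_square)
    moreover have "- (real k ^ 2) / (2*(m/2)) - 2 * real k ^ 3 / (m/2)^2 = - (real k ^ 2) / m - 8 * real k ^ 3 / m^2"
      using m by (simp add: field_simps power2_eq_square)
    ultimately show ?thesis by linarith
  qed
  ultimately show ?thesis by (meson exp_le_cancel_iff order.trans)
qed

lemma SY_lower:
  fixes p q m :: real
  assumes m: "m > 0" and p: "p \<ge> 0" and q: "q \<ge> 0" and pq: "p + q = 1"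
    and N: "4 * real N \<le> m"
  shows "exp (- (1 + 8 * real N / m) * ((p^2 + q^2) * real N ^ 2 + real N / 2) / m) \<le> SY p q (m/2) N"
proof -
  define c where "c = 1 + 8 * real N / m"
  have "8 * real N / m \<ge> 0" using m by simp
  then have c0: "c > 0" unfolding c_def by linarith
  define w where "w k = real (N choose k) * p^k * q^(N-k)" for k
  define y where "y k = - c * (real k ^ 2 + real (N - k) ^ 2) / m" for k
  have w0: "\<And>k. w k \<ge> 0" using p q by (simp add: w_def)
  have w1: "(\<Sum>k\<le>N. w k) = 1" unfolding w_def using binomial_ring[of p q N] pq by simp
  have F1: "(\<Sum>k\<le>N. w k * exp (y k)) \<le> SY p q (m/2) N"
    unfolding SY_def
  proof (rule sum_mono)
    fix k assume "k \<in> {..N}"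
    then have kN: "real k \<le> real N" "real (N - k) \<le> real N" by auto
    have b1: "exp (- c * real k ^ 2 / m) \<le> fp (m/2) k" unfolding c_def by (rule fp_lower2[OF m kN(1) N])
    have b2: "exp (- c * real (N-k) ^ 2 / m) \<le> fp (m/2) (N-k)" unfolding c_def by (rule fp_lower2[OF m kN(2) N])
    have "exp (y k) = exp (- c * real k ^ 2 / m) * exp (- c * real (N-k) ^ 2 / m)"
      unfolding y_def mult_exp_exp by (rule arg_cong[where f=exp]) (use m in \<open>simp add: field_simps\<close>)
    also have "\<dots> \<le> fp (m/2) k * fp (m/2) (N-k)"
      by (intro mult_mono b1 b2) (auto intro: order.trans[OF _ b1])
    finally have "w k * exp (y k) \<le> w k * (fp (m/2) k * fp (m/2) (N-k))"
      using w0 by (intro mult_left_mono) auto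
    then show "w k * exp (y k) \<le> real (N choose k) * (p^k * fp (m/2) k) * (q^(N-k) * fp (m/2) (N-k))"
      by (simp add: w_def mult_ac)
  qed
  have F2: "exp (\<Sum>k\<le>N. w k * y k) \<le> (\<Sum>k\<le>N. w k * exp (y k))"
    by (rule jensen_exp[OF _ _ w1]) (auto simp: w0)
  have F3: "(\<Sum>k\<le>N. w k * y k) = - c / m * (real N ^ 2 - 2 * (real N * (real N - 1) * p * q))"
  proof -
    have "(\<Sum>k\<le>N. w k * y k) = (\<Sum>k\<le>N. - c / m * (real N ^ 2 * w k - 2 * (w k * (real k * real (N - k)))))"
    proof (rule sum.cong[OF refl])
      fix k assume "k \<in> {..N}"
      then have rk: "real (N - k) = real N - real k" by auto
      show "w k * y k = - c / m * (real N ^ 2 * w k - 2 * (w k * (real k * real (N - k))))"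
        unfolding y_def rk using m by (simp add: field_simps power2_eq_square)
    qed
    also have "\<dots> = - c / m * (real N ^ 2 * (\<Sum>k\<le>N. w k) - 2 * (\<Sum>k\<le>N. w k * (real k * real (N - k))))"
      by (simp only: sum_distrib_left[symmetric] sum_subtractf)
    also have "(\<Sum>k\<le>N. w k * (real k * real (N - k))) = real N * (real N - 1) * p * q"
      unfolding w_def using binom_kNk[of N p q] pq by simp
    finally show ?thesis using w1 by simp
  qed
  have F4: "- c * ((p^2 + q^2) * real N ^ 2 + real N / 2) / m \<le> - c / m * (real N ^ 2 - 2 * (real N * (real N - 1) * p * q))"
  proof -
    have pq4: "4 * (p * q) \<le> 1"
    proof -
      have qq: "q = 1 - p" using pq by simp
      have "4*(p*q) = 1 - (2*p-1)^2" unfolding qq by (simp add: power2_eq_square algebra_simps)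
      moreover have "0 \<le> (2*p-1)^2" by simp
      ultimately show ?thesis by linarith
    qed
    have qq: "q = 1 - p" using pq by simp
    have "real N ^ 2 - 2 * (real N * (real N - 1) * p * q) = (p^2 + q^2) * real N ^ 2 + 2 * real N * (p * q)"
      unfolding qq by (simp add: algebra_simps power2_eq_square)
    also have "\<dots> \<le> (p^2 + q^2) * real N ^ 2 + real N / 2"
    proof -
      have "real N * (4*(p*q)) \<le> real N * 1" by (rule mult_left_mono[OF pq4]) simp
      then show ?thesis by simp
    qed
    finally have "real N ^ 2 - 2 * (real N * (real N - 1) * p * q) \<le> (p^2 + q^2) * real N ^ 2 + real N / 2" .
    then have "c / m * (real N ^ 2 - 2 * (real N * (real N - 1) * p * q)) \<le> c / m * ((p^2 + q^2) * real N ^ 2 + real N / 2)"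
      using c0 m by (intro mult_left_mono) auto
    moreover have "- c * ((p^2 + q^2) * real N ^ 2 + real N / 2) / m = - (c / m * ((p^2 + q^2) * real N ^ 2 + real N / 2))"
      by simp
    moreover have "- c / m * (real N ^ 2 - 2 * (real N * (real N - 1) * p * q)) = - (c / m * (real N ^ 2 - 2 * (real N * (real N - 1) * p * q)))"
      by simp
    ultimately show ?thesis by linarith
  qed
  from F4 have "exp (- c * ((p^2 + q^2) * real N ^ 2 + real N / 2) / m) \<le> exp (\<Sum>k\<le>N. w k * y k)"
    unfolding F3 by (simp only: exp_le_cancel_iff)
  also note F2
  also note F1
  finally show ?thesis unfolding c_def .
qed


lemma probA_eq:
  assumes m: "m > 0" and ev: "even m" and w: "w \<in> Kset m"
  shows "probA \<epsilon> m N n w = fp (real m) N * SY ((1+\<epsilon>)/2) ((1-\<epsilon>)/2) (real m/2) N"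
proof -
  let ?A = "{1..m}"
  let ?X = "PiE {..<N} (\<lambda>_. ?A)" and ?Z = "PiE {..<n} (\<lambda>_. ?A)"
  define fx where "fx x = (\<Prod>i<N. unif m (x i)) * of_bool (inj_on x {..<N})" for x :: "nat \<Rightarrow> nat"
  define fy where "fy y = (\<Prod>i<N. qdist \<epsilon> m w (y i)) * of_bool (inj_on y {..<N})" for y :: "nat \<Rightarrow> nat"
  define fz where "fz z = (\<Prod>i<n. unif m (z i))" for z :: "nat \<Rightarrow> nat"
  have "probA \<epsilon> m N n w = (\<Sum>x\<in>?X. \<Sum>y\<in>?X. \<Sum>z\<in>?Z. fx x * fy y * fz z)"
    unfolding probA_def fx_def fy_def fz_def by (intro sum.cong refl) auto
  also have "\<dots> = (\<Sum>x\<in>?X. fx x) * (\<Sum>y\<in>?X. fy y) * (\<Sum>z\<in>?Z. fz z)"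
  proof -
    have "(\<Sum>x\<in>?X. fx x) * (\<Sum>y\<in>?X. fy y) * (\<Sum>z\<in>?Z. fz z) = (\<Sum>x\<in>?X. fx x * ((\<Sum>y\<in>?X. fy y) * (\<Sum>z\<in>?Z. fz z)))"
      by (simp add: sum_distrib_right mult.assoc)
    also have "\<dots> = (\<Sum>x\<in>?X. \<Sum>y\<in>?X. \<Sum>z\<in>?Z. fx x * fy y * fz z)"
    proof (rule sum.cong[OF refl])
      fix x
      have "fx x * ((\<Sum>y\<in>?X. fy y) * (\<Sum>z\<in>?Z. fz z)) = (\<Sum>y\<in>?X. fx x * fy y * (\<Sum>z\<in>?Z. fz z))"
        unfolding sum_distrib_right[symmetric] sum_distrib_left[symmetric] by (simp add: mult.assoc)
      also have "\<dots> = (\<Sum>y\<in>?X. \<Sum>z\<in>?Z. fx x * fy y * fz z)"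
        by (simp add: sum_distrib_left)
      finally show "fx x * ((\<Sum>y\<in>?X. fy y) * (\<Sum>z\<in>?Z. fz z)) = (\<Sum>y\<in>?X. \<Sum>z\<in>?Z. fx x * fy y * fz z)" .
    qed
    finally show ?thesis by simp
  qed
  also have "(\<Sum>z\<in>?Z. fz z) = 1"
  proof -
    have "(\<Sum>z\<in>?Z. fz z) = (\<Sum>z\<in>?Z. (1 / real m)^n)" unfolding fz_def unif_def by simp
    also have "\<dots> = real (card ?Z) * (1 / real m)^n" by simp
    also have "card ?Z = m ^ n" by (simp add: card_PiE)
    finally show ?thesis using m by (simp add: power_divide)
  qed
  also have "(\<Sum>x\<in>?X. fx x) = fp (real m) N"
  proof -
    have "(\<Sum>x\<in>?X. fx x) = T (\<lambda>_. 1 / real m) ?A N" unfolding fx_def T_def unif_def by simp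
    also have "\<dots> = (1 / real m)^N * ff (real m) N" by (simp add: Tconst)
    also have "\<dots> = fp (real m) N" using m by (simp add: ff_fp)
    finally show ?thesis .
  qed
  also have "(\<Sum>y\<in>?X. fy y) = SY ((1+\<epsilon>)/2) ((1-\<epsilon>)/2) (real m/2) N"
  proof -
    have wsub: "w \<subseteq> ?A" and cw: "card w = m div 2" using w by (auto simp: Kset_def)
    have q: "qdist \<epsilon> m w = (\<lambda>j. if j \<in> w then (1+\<epsilon>)/real m else (1-\<epsilon>)/real m)"
      by (auto simp: qdist_def)
    have c1: "real (card (?A \<inter> w)) = real m / 2"
      using wsub cw ev by (simp add: Int_absorb1 real_of_nat_div)
    have c2: "real (card (?A - w)) = real m / 2"
    proof -
      have "card (?A - w) = m - m div 2" using wsub cw by (simp add: card_Diff_subset finite_subset)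
      then show ?thesis using ev by (auto simp: of_nat_diff real_of_nat_div elim!: evenE)
    qed
    have "(\<Sum>y\<in>?X. fy y) = T (qdist \<epsilon> m w) ?A N" unfolding fy_def T_def by simp
    also have "\<dots> = Gf ((1+\<epsilon>)/real m) ((1-\<epsilon>)/real m) (real m / 2) (real m / 2) N"
      unfolding q by (simp add: Ttwo c1 c2 del: One_nat_def)
    also have "\<dots> = SY ((1+\<epsilon>)/2) ((1-\<epsilon>)/2) (real m/2) N"
      unfolding Gf_def SY_def
    proof (intro sum.cong refl)
      fix k
      have h: "real m / 2 > 0" using m by simp
      have "(1+\<epsilon>)/real m * (real m/2) = (1+\<epsilon>)/2" "(1-\<epsilon>)/real m * (real m/2) = (1-\<epsilon>)/2" using m by auto
      then show "real (N choose k) * (((1+\<epsilon>)/real m)^k * ff (real m / 2) k) * (((1-\<epsilon>)/real m)^(N-k) * ff (real m / 2) (N-k))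
          = real (N choose k) * (((1+\<epsilon>)/2)^k * fp (real m/2) k) * (((1-\<epsilon>)/2)^(N-k) * fp (real m/2) (N-k))"
        using ff_fp[OF h] by metis
    qed
    finally show ?thesis .
  qed
  finally show ?thesis by simp
qed


lemma lin_helper:
  fixes K4 XA SXA Xa XX x P SA TXa a Az L :: real
  assumes "K4 \<le> 4 * XA" "SXA \<le> 1 * XA" "XA \<le> Xa" "XX \<le> x * (1/4)"
    "P = SA + 8 * SXA + x / 2 + 4 * XX" "TXa = 10 * Xa" "a = Az / 2 + SA"
    "L \<le> - (Az - x) / 2 + x - SA + K4" "- Az / 2 - 2 * XA - P \<le> L"
    "0 \<le> x" "x \<le> 1/4" "0 \<le> XA"
  shows "- (TXa + 1) \<le> L + a" "L + a \<le> TXa + 1"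
proof -
  have u: "L \<le> x/2 - Az/2 + x - SA + K4" using assms(8) by (simp add: field_simps)
  show "- (TXa + 1) \<le> L + a" using assms u by linarith
  show "L + a \<le> TXa + 1" using assms u by linarith
qed

lemma final_arith:
  fixes L Az x s kf a :: real
  assumes Az: "Az \<ge> 0" and x0: "x \<ge> 0" and x1: "x \<le> 1/4" and s1: "s \<ge> 1/2" and s2: "s \<le> 1"
    and k0: "kf \<ge> 0" and k1: "kf \<le> 4"
    and up: "L \<le> - (Az - x) / 2 + x - s * Az + kf * (x * Az)"
    and lo: "L \<ge> - Az / 2 - 2 * (x * Az) - (1 + 8 * x) * (s * Az + x / 2)"
    and a: "a = (1/2 + s) * Az"
  shows "\<bar>L + a\<bar> \<le> 10 * x * a + 1"
proof -
  have xa: "x * Az \<ge> 0" using Az x0 by simp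
  have "kf * (x * Az) \<le> 4 * (x * Az)" using k1 xa by (intro mult_right_mono) auto
  moreover have "s * (x * Az) \<le> 1 * (x * Az)" using s2 xa by (intro mult_right_mono) auto
  moreover have "x * a \<ge> x * Az"
  proof -
    have "Az * s \<ge> Az * (1/2)" using s1 Az by (intro mult_left_mono) auto
    then have "Az \<le> a" using a by (simp add: algebra_simps)
    then show ?thesis using x0 by (intro mult_left_mono) auto
  qed
  moreover have "x * x \<le> x * (1/4)" using x0 x1 by (intro mult_left_mono) auto
  moreover have "(1 + 8 * x) * (s * Az + x / 2) = s * Az + 8 * (s * (x * Az)) + x / 2 + 4 * (x * x)"
    by (simp add: algebra_simps)
  moreover have "10 * x * a = 10 * (x * a)" by simp
  moreover have "a = Az / 2 + s * Az" using a by (simp add: algebra_simps)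
  ultimately have "- (10 * x * a + 1) \<le> L + a" "L + a \<le> 10 * x * a + 1"
    using up lo x0 x1 xa lin_helper[of "kf * (x * Az)" "x * Az" "s * (x * Az)" "x * a" "x * x" x "(1 + 8 * x) * (s * Az + x / 2)" "s * Az" "10 * x * a" a Az L]
    by blast+
  then show ?thesis by (auto simp: abs_le_iff)
qed

lemma ln_between:
  fixes l u P :: real
  assumes "exp l \<le> P" "P \<le> exp u"
  shows "l \<le> ln P" "ln P \<le> u"
proof -
  have P: "P > 0" using assms(1) exp_gt_zero[of l] by linarith
  show "l \<le> ln P" using assms(1) P by (metis ln_exp ln_le_cancel_iff exp_gt_zero)
  show "ln P \<le> u" using assms(2) P by (metis ln_exp ln_le_cancel_iff exp_gt_zero)
qed

theorem lemma2:
  fixes N n :: "nat \<Rightarrow> nat" and \<epsilon> :: real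
  assumes Npos: "\<forall>m. N m > 0" and npos: "\<forall>m. n m > 0"
    and No: "(\<lambda>k. real (N (2*k)) / real (2*k)) \<longlonglongrightarrow> 0"
    and no: "(\<lambda>k. real (n (2*k)) / real (2*k)) \<longlonglongrightarrow> 0"
    and eps: "0 < \<epsilon>" "\<epsilon> \<le> 1"
  shows "\<exists>\<delta> :: nat \<Rightarrow> real. \<delta> \<longlonglongrightarrow> 0 \<and> (\<exists>C::real. \<exists>M::nat. \<forall>m\<ge>M. even m \<longrightarrow>
           (\<forall>w\<in>Kset m. \<exists>r. \<bar>r\<bar> \<le> \<delta> m \<and>
              \<bar>ln (probA \<epsilon> m (N m) (n m) w)
                 + (1 + \<epsilon>\<^sup>2 / 2) * (real (N m))\<^sup>2 / real m * (1 + r)\<bar> \<le> C))"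
proof -
  define \<delta> where "\<delta> m = (if even m then 10 * real (N m) / real m else 0)" for m
  have lim: "\<delta> \<longlonglongrightarrow> 0"
    unfolding lim_sequentially
  proof (intro allI impI)
    fix e :: real assume e: "e > 0"
    obtain K where K: "\<And>k. k \<ge> K \<Longrightarrow> dist (real (N (2*k)) / real (2*k)) 0 < e / 10"
      using No e unfolding lim_sequentially by (metis divide_pos_pos zero_less_numeral)
    show "\<exists>no. \<forall>m\<ge>no. dist (\<delta> m) 0 < e"
    proof (intro exI allI impI)
      fix m assume m: "m \<ge> 2 * K"
      show "dist (\<delta> m) 0 < e"
      proof (cases "even m")
        case True
        then obtain k where k: "m = 2 * k" by (auto elim: evenE)
        then have "k \<ge> K" using m by simp
        then have "dist (real (N (2*k)) / real (2*k)) 0 < e / 10" by (rule K)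
        then have lt: "real (N m) / real m < e / 10" unfolding k dist_real_def
          using abs_ge_self[of "real (N (2 * k)) / real (2 * k)"] by (simp only: diff_zero)
        have d: "\<delta> m = 10 * (real (N m) / real m)" using True by (simp add: \<delta>_def)
        have nn: "0 \<le> real (N m) / real m" by simp
        have "dist (\<delta> m) 0 = \<bar>\<delta> m\<bar>" by simp
        also have "\<dots> = \<delta> m" using d nn by simp
        finally show ?thesis using d lt by linarith
      next
        case False then show ?thesis using e by (simp add: \<delta>_def)
      qed
    qed
  qed
  obtain K where K: "\<And>k. k \<ge> K \<Longrightarrow> dist (real (N (2*k)) / real (2*k)) 0 < 1/4"
    using No unfolding lim_sequentially by (metis zero_less_divide_1_iff zero_less_numeral)
  have main: "\<exists>r. \<bar>r\<bar> \<le> \<delta> m \<and>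
              \<bar>ln (probA \<epsilon> m (N m) (n m) w)
                 + (1 + \<epsilon>\<^sup>2 / 2) * (real (N m))\<^sup>2 / real m * (1 + r)\<bar> \<le> 1"
    if m: "m \<ge> 2 * K + 2" and ev: "even m" and w: "w \<in> Kset m" for m w
  proof -
    obtain k where k: "m = 2 * k" using ev by (auto elim: evenE)
    have "k \<ge> K" using m k by simp
    from K[OF this] have t: "real (N m) / real m < 1/4" using k by simp
    have m0: "real m > 0" using m by simp
    define Nr where "Nr = real (N m)"
    define mr where "mr = real m"
    define p where "p = (1+\<epsilon>)/2"
    define q where "q = (1-\<epsilon>)/2"
    have Nr0: "Nr > 0" using Npos by (simp add: Nr_def)
    have mr0: "mr > 0" using m0 by (simp add: mr_def)
    have N4: "4 * Nr \<le> mr" using t mr0 by (simp add: Nr_def mr_def field_simps)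
    have pq: "p \<ge> 0" "q \<ge> 0" "p + q = 1" "q \<le> p" "p \<le> 1" using eps by (auto simp: p_def q_def add_divide_distrib[symmetric])
    have s: "p^2 + q^2 = (1 + \<epsilon>^2) / 2" by (simp add: p_def q_def power2_eq_square field_simps)
    have PA: "probA \<epsilon> m (N m) (n m) w = fp mr (N m) * SY p q (mr/2) (N m)"
      unfolding p_def q_def mr_def by (rule probA_eq[OF _ ev w]) (use m in simp)
    have X1: "fp mr (N m) \<le> exp (- (Nr^2 - Nr) / (2*mr))"
      unfolding Nr_def by (rule fp_upper) (use mr0 N4 in \<open>auto simp: Nr_def\<close>)
    have X2: "exp (- (Nr^2) / (2*mr) - 2 * Nr^3 / mr^2) \<le> fp mr (N m)"
      unfolding Nr_def by (rule fp_lower) (use mr0 N4 in \<open>auto simp: Nr_def\<close>)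
    have Y1: "SY p q (mr/2) (N m) \<le> exp (Nr / mr - (p^2 + q^2) * Nr ^ 2 / mr + 4 * p * (p-q)^2 * Nr ^ 3 / mr^2)"
      unfolding Nr_def by (rule SY_upper) (use mr0 N4 pq in \<open>auto simp: Nr_def\<close>)
    have Y2: "exp (- (1 + 8 * Nr / mr) * ((p^2 + q^2) * Nr ^ 2 + Nr / 2) / mr) \<le> SY p q (mr/2) (N m)"
      unfolding Nr_def by (rule SY_lower) (use mr0 N4 pq in \<open>auto simp: Nr_def\<close>)
    have fx0: "fp mr (N m) > 0" using X2 exp_gt_zero by (meson less_le_trans)
    have sy0: "SY p q (mr/2) (N m) > 0" using Y2 exp_gt_zero by (meson less_le_trans)
    have lnP: "ln (probA \<epsilon> m (N m) (n m) w) = ln (fp mr (N m)) + ln (SY p q (mr/2) (N m))"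
      unfolding PA using fx0 sy0 by (simp add: ln_mult)
    define x where "x = Nr / mr"
    define Az where "Az = Nr^2 / mr"
    define a where "a = (1 + \<epsilon>\<^sup>2 / 2) * (real (N m))\<^sup>2 / real m"
    define L where "L = ln (probA \<epsilon> m (N m) (n m) w)"
    have xAz: "x * Az = Nr^3 / mr^2" by (simp add: x_def Az_def power2_eq_square power3_eq_cube)
    have bound: "\<bar>L + a\<bar> \<le> 10 * x * a + 1"
    proof (rule final_arith[where s = "p^2+q^2" and kf = "4 * p * (p-q)^2" and Az = Az])
      show "Az \<ge> 0" "x \<ge> 0" using mr0 Nr0 by (auto simp: Az_def x_def)
      show "x \<le> 1/4" using t by (simp add: x_def Nr_def mr_def)
      show "p^2 + q^2 \<ge> 1/2" "p^2 + q^2 \<le> 1" unfolding s using eps by (auto simp: power_le_one)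
      show "4 * p * (p-q)^2 \<ge> 0" using pq by simp
      have "(p - q)^2 \<le> 1" using pq by (simp add: abs_le_iff power_le_one_iff abs_square_le_1)
      then show "4 * p * (p-q)^2 \<le> 4" using pq mult_le_one[of p "(p-q)^2"] by simp
      show "a = (1/2 + (p^2 + q^2)) * Az" unfolding s a_def Az_def Nr_def mr_def by (simp add: field_simps)
      have "L \<le> - (Nr^2 - Nr) / (2*mr) + (Nr / mr - (p^2 + q^2) * Nr ^ 2 / mr + 4 * p * (p-q)^2 * Nr ^ 3 / mr^2)"
        unfolding L_def lnP using ln_between(2)[OF X2 X1] ln_between(2)[OF Y2 Y1] by linarith
      then show "L \<le> - (Az - x) / 2 + x - (p^2 + q^2) * Az + 4 * p * (p-q)^2 * (x * Az)"
        unfolding xAz using mr0 by (simp add: Az_def x_def field_simps)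
      have "L \<ge> (- (Nr^2) / (2*mr) - 2 * Nr^3 / mr^2) + (- (1 + 8 * Nr / mr) * ((p^2 + q^2) * Nr ^ 2 + Nr / 2) / mr)"
        unfolding L_def lnP using ln_between(1)[OF X2 X1] ln_between(1)[OF Y2 Y1] by linarith
      then show "L \<ge> - Az / 2 - 2 * (x * Az) - (1 + 8 * x) * ((p^2 + q^2) * Az + x / 2)"
        unfolding xAz using mr0 by (simp add: Az_def x_def field_simps)
    qed
    have a0: "a > 0" unfolding a_def using Nr0 mr0 eps
      by (intro divide_pos_pos mult_pos_pos) (auto simp: Nr_def mr_def add_pos_nonneg)
    define D where "D = L + a"
    define E where "E = max (-1) (min 1 D)"
    define r where "r = - (D - E) / a"
    have x0: "x \<ge> 0" using Nr0 mr0 by (simp add: x_def)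
    have xa0: "0 \<le> 10 * x * a" using x0 a0 by simp
    have bD: "\<bar>D\<bar> \<le> 10 * x * a + 1" using bound by (simp add: D_def)
    have dE: "\<bar>D - E\<bar> \<le> 10 * x * a" using bD xa0 by (auto simp: E_def max_def min_def abs_le_iff)
    have "\<bar>r\<bar> \<le> 10 * x" using dE a0 by (simp add: r_def abs_divide field_simps)
    moreover have "10 * x = \<delta> m" using ev by (simp add: \<delta>_def x_def Nr_def mr_def)
    moreover have "L + a * (1 + r) = E" using a0 by (simp add: r_def D_def field_simps)
    moreover have "\<bar>E\<bar> \<le> 1" by (simp add: E_def abs_le_iff)
    ultimately show ?thesis unfolding L_def a_def by (intro exI[of _ r]) (simp add: mult.assoc)
  qed
  show ?thesis
    by (rule exI[of _ \<delta>], intro conjI lim exI[of _ "1::real"] exI[of _ "2 * K + 2"]) (use main in blast)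
qed

end
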